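(* Let $n\ge2$ and let $A[0],\dots,A[n-1]$ be integers with $0=A[0]<A[1]<\cdots<A[n-1]=M$, and assume $2A[i]\le A[2i]$ for all $i$ with $2i\le n-1$. Let $D=Mn+1$. Consider the $0/1$-Knapsack instance with capacity $2n-1$ and the following items (weight, value): for $i=1,\dots,n-1$, an item $(i,\,2A[i])$; for each $i\in\{0,\dots,n-1\}\setminus\{1\}$, an item $(2n-1-i,\,2(D-A[i]))$; and an item $(2n-2,\,2(D-A[1])+1)$. Then the optimal value of this instance is odd if and only if $A$ is super-additive, i.e. $A[i]+A[j]\le A[i+j]$ for all $i,j\ge0$ with $i+j\le n-1$.
   Context: $0/1$-Knapsack: given items $(w_i,v_i)$ and capacity $t$, the optimal value is $\max\sum_{i\in I}v_i$ over subsets $I$ of items with $\sum_{i\in I}w_i\le t$ (each item used at most once). *)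

theory Defs
  imports Main
begin

text \<open>0/1-Knapsack: items are (weight, value) pairs in a list (index = item identity,
so duplicate pairs are distinct items); the optimal value is the maximum total value
over subsets of item indices whose total weight is at most the capacity.\<close>
definition knapsack_opt :: "(nat \<times> int) list \<Rightarrow> nat \<Rightarrow> int" where
  "knapsack_opt items t =
     Max {(\<Sum>i\<in>I. snd (items ! i)) | I. I \<subseteq> {..<length items} \<and> (\<Sum>i\<in>I. fst (items ! i)) \<le> t}"

definition super_additive :: "nat \<Rightarrow> (nat \<Rightarrow> int) \<Rightarrow> bool" where
  "super_additive n A \<longleftrightarrow> (\<forall>i j. i + j \<le> n - 1 \<longrightarrow> A i + A j \<le> A (i + j))"

definition reduction_items :: "nat \<Rightarrow> (nat \<Rightarrow> int) \<Rightarrow> (nat \<times> int) list" where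
  "reduction_items n A =
    (let M = A (n - 1); D = M * int n + 1 in
       [(i, 2 * A i). i \<leftarrow> [1..<n]]
     @ [(2 * n - 1 - i, 2 * (D - A i)). i \<leftarrow> filter (\<lambda>i. i \<noteq> 1) [0..<n]]
     @ [(2 * n - 2, 2 * (D - A 1) + 1)])"

end

theory Submission imports Defs begin

lemma items_facts:
  fixes n :: nat and A :: "nat \<Rightarrow> int"
  assumes n2: "n \<ge> 2"
  defines "items \<equiv> reduction_items n A" and "D \<equiv> A (n-1) * int n + 1"
  shows "length items = 2*n-1"
   and "p < n-1 \<Longrightarrow> items!p = (p+1, 2*A(p+1))"
   and "items!(2*n-2) = (2*n-2, 2*(D - A 1)+1)"
   and "n-1 < b \<Longrightarrow> b < 2*n-2 \<Longrightarrow> items!b = (2*n-1-(b-n+2), 2*(D - A (b-n+2)))"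
   and "n-1 \<le> b \<Longrightarrow> b < 2*n-1 \<Longrightarrow> \<exists>k. k \<le> n-1 \<and> items!b = (2*n-1-k, 2*(D - A k) + (if k = 1 then 1 else 0))"
proof -
  have u: "[0..<n] = 0 # 1 # [2..<n]" using n2 by (simp add: upt_conv_Cons numeral_2_eq_2)
  have f: "filter (\<lambda>i. i \<noteq> 1) [0..<n] = 0 # [2..<n]" unfolding u by (simp add: filter_id_conv)
  have it: "items = map (\<lambda>i. (i, 2 * A i)) [1..<n] @ ((2*n-1, 2*(D - A 0)) # map (\<lambda>i. (2 * n - 1 - i, 2 * (D - A i))) [2..<n]) @ [(2 * n - 2, 2 * (D - A 1) + 1)]"
    unfolding items_def reduction_items_def D_def Let_def f by simp
  show "length items = 2*n-1" unfolding it using n2 by simp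
  show "p < n-1 \<Longrightarrow> items!p = (p+1, 2*A(p+1))" unfolding it by (simp add: nth_append)
  show sp: "items!(2*n-2) = (2*n-2, 2*(D - A 1)+1)" unfolding it using n2 by (simp add: nth_append; arith)
  show mid: "\<And>b. n-1 < b \<Longrightarrow> b < 2*n-2 \<Longrightarrow> items!b = (2*n-1-(b-n+2), 2*(D - A (b-n+2)))"
  proof -
    fix b assume b: "n-1 < b" "b < 2*n-2"
    show "items!b = (2*n-1-(b-n+2), 2*(D - A (b-n+2)))"
      proof -
        define q where "q = b - (n-1)"
        have q: "1 \<le> q" "q < n-1" "b = (n-1) + q" using b n2 unfolding q_def by auto
        have "items ! b = (((2*n-1, 2*(D - A 0)) # map (\<lambda>i. (2 * n - 1 - i, 2 * (D - A i))) [2..<n]) @ [(2 * n - 2, 2 * (D - A 1) + 1)]) ! q"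
          unfolding it q(3) by (simp add: nth_append)
        also have "\<dots> = ((2*n-1, 2*(D - A 0)) # map (\<lambda>i. (2 * n - 1 - i, 2 * (D - A i))) [2..<n]) ! q"
          using q by (intro nth_append_left) simp
        also have "\<dots> = map (\<lambda>i. (2 * n - 1 - i, 2 * (D - A i))) [2..<n] ! (q - 1)"
          using q by (simp add: nth_Cons')
        also have "\<dots> = (2*n-1-(q+1), 2*(D - A (q+1)))"
        proof -
          have "q - 1 < length [2..<n]" using q by simp
          moreover have "[2..<n] ! (q-1) = q+1" using q by (subst nth_upt) auto
          ultimately show ?thesis by simp
        qed
        finally show ?thesis using q by simp
      qed
  qed
  assume b: "n-1 \<le> b" "b < 2*n-1"
  show "\<exists>k. k \<le> n-1 \<and> items!b = (2*n-1-k, 2*(D - A k) + (if k = 1 then 1 else 0))"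
  proof (cases "b = n-1")
    case True thus ?thesis unfolding it using n2 by (intro exI[of _ 0]) (simp add: nth_append)
  next
    case False
    show ?thesis
    proof (cases "b = 2*n-2")
      case True thus ?thesis unfolding it using n2 by (intro exI[of _ 1]) (simp add: nth_append; arith)
    next
      case False2: False
      have "items!b = (2*n-1-(b-n+2), 2*(D - A (b-n+2)))"
      by (rule mid) (use b False False2 in auto)
      thus ?thesis using b False False2 n2 by (intro exI[of _ "b-n+2"]) auto
    qed
  qed
qed
lemma sa_sum:
  fixes A :: "nat \<Rightarrow> int"
  assumes SA: "super_additive n A" and A0: "A 0 = 0"
  shows "finite S \<Longrightarrow> (\<Sum>p\<in>S. p+1) \<le> n-1 \<Longrightarrow> (\<Sum>p\<in>S. A(p+1)) \<le> A(\<Sum>p\<in>S. p+1)"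
proof (induction S rule: finite_induct)
  case empty thus ?case using A0 by simp
next
  case (insert x F)
  have le: "x + 1 + (\<Sum>p\<in>F. p+1) \<le> n-1" using insert by simp
  have "(\<Sum>p\<in>insert x F. A(p+1)) = A(x+1) + (\<Sum>p\<in>F. A(p+1))" using insert by simp
  also have "\<dots> \<le> A(x+1) + A(\<Sum>p\<in>F. p+1)" using insert le by simp
  also have "\<dots> \<le> A(x+1 + (\<Sum>p\<in>F. p+1))" using SA le unfolding super_additive_def by blast
  finally show ?case using insert by simp
qed

theorem mainTheorem16:
  fixes n :: nat and A :: "nat \<Rightarrow> int"
  assumes "n \<ge> 2"
    and "A 0 = 0"
    and "\<And>i j. i < j \<Longrightarrow> j \<le> n - 1 \<Longrightarrow> A i < A j"
    and "\<And>i. 2 * i \<le> n - 1 \<Longrightarrow> 2 * A i \<le> A (2 * i)"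
  shows "odd (knapsack_opt (reduction_items n A) (2 * n - 1)) \<longleftrightarrow> super_additive n A"
proof -
  note n2 = assms(1) and A0 = assms(2)
  define items where "items = reduction_items n A"
  define D where "D = A (n-1) * int n + 1"
  define M where "M = A (n-1)"
  note IF = items_facts[OF n2, where A=A, folded items_def D_def]
  have mono: "A i \<le> A j" if "i \<le> j" "j \<le> n-1" for i j
    using assms(3)[of i j] that by (cases "i = j") auto
  have nonneg: "0 \<le> A j" if "j \<le> n-1" for j using mono[of 0 j] that A0 by simp
  have leM: "A j \<le> M" if "j \<le> n-1" for j using mono[of j "n-1"] that unfolding M_def by simp
  have M0: "0 \<le> M" using nonneg[of "n-1"] unfolding M_def by simp
  have DM: "D = M * int n + 1" unfolding D_def M_def by simp
  define val where "val I = (\<Sum>i\<in>I. snd (items ! i))" for I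
  define wt where "wt I = (\<Sum>i\<in>I. fst (items ! i))" for I
  define F where "F = {I. I \<subseteq> {..<2*n-1} \<and> wt I \<le> 2*n-1}"
  have opt: "knapsack_opt items (2*n-1) = Max (val ` F)"
    unfolding knapsack_opt_def val_def wt_def F_def IF(1) by (rule arg_cong[where f=Max]) auto
  have finF: "finite (val ` F)"
  proof -
    have "F \<subseteq> Pow {..<2*n-1}" unfolding F_def by auto
    hence "finite F" by (rule finite_subset) simp
    thus ?thesis by simp
  qed
  have key: "(odd (val I) \<longrightarrow> val I \<le> 2*D+1) \<and> (super_additive n A \<longrightarrow> val I \<le> 2*D+1)" if IF0: "I \<in> F" for I
  proof -
    define S where "S = I \<inter> {..<n-1}"
    define B where "B = I - {..<n-1}"
    have Isub: "I \<subseteq> {..<2*n-1}" and wI: "wt I \<le> 2*n-1" using IF0 unfolding F_def by auto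
    have finI: "finite I" using Isub finite_subset by blast
    have finS: "finite S" "finite B" using finI unfolding S_def B_def by auto
    have ISB: "I = S \<union> B" "S \<inter> B = {}" unfolding S_def B_def by auto
    have valI: "val I = val S + val B" unfolding val_def using ISB finS by (simp add: sum.union_disjoint)
    have wtI: "wt I = wt S + wt B" unfolding wt_def using ISB finS by (simp add: sum.union_disjoint)
    have valS: "val S = 2 * (\<Sum>p\<in>S. A(p+1))" unfolding val_def sum_distrib_left
      by (rule sum.cong) (auto simp: S_def IF(2))
    have wtS: "wt S = (\<Sum>p\<in>S. p+1)" unfolding wt_def
      by (rule sum.cong) (auto simp: S_def IF(2))
    have Bbig: "n-1 \<le> b \<and> b < 2*n-1" if "b \<in> B" for b using that Isub unfolding B_def by auto
    have Bw: "n \<le> fst (items ! b)" if bB0: "b \<in> B" for b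
    proof -
      obtain k where "k \<le> n-1" "items!b = (2*n-1-k, 2*(D - A k) + (if k = 1 then 1 else 0))"
        using IF(5)[of b] Bbig[OF bB0] by blast
      thus ?thesis using n2 by simp
    qed
    have Bcard: "b1 = b2" if "b1 \<in> B" "b2 \<in> B" for b1 b2
    proof (rule ccontr)
      assume ne: "b1 \<noteq> b2"
      have "wt {b1,b2} \<le> wt B" unfolding wt_def using that finS by (intro sum_mono2) auto
      moreover have "wt {b1,b2} \<ge> 2*n" unfolding wt_def using ne Bw[OF that(1)] Bw[OF that(2)] by simp
      ultimately show False using wI wtI n2 by linarith
    qed
    have SA_bound: "(\<Sum>p\<in>S. A(p+1)) \<le> of_nat (n-1) * M"
    proof -
      have "(\<Sum>p\<in>S. A(p+1)) \<le> (\<Sum>p\<in>{..<n-1}. A(p+1))"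
        by (intro sum_mono2) (auto simp: S_def intro!: nonneg)
      also have "\<dots> \<le> (\<Sum>p\<in>{..<n-1}. M)" by (intro sum_mono leM) auto
      finally show ?thesis by simp
    qed
    show ?thesis
    proof (cases "B = {}")
      case True
      have "val I = 2 * (\<Sum>p\<in>S. A(p+1))" using valI valS True by (simp add: val_def)
      also have "\<dots> \<le> 2 * (of_nat (n-1) * M)" using SA_bound by simp
      also have "\<dots> \<le> 2 * (of_nat n * M)" using M0 n2 by (intro mult_left_mono mult_right_mono) auto
      finally have "val I \<le> 2*D+1" unfolding DM by (simp add: algebra_simps)
      thus ?thesis by simp
    next
      case False
      then obtain b where bB: "b \<in> B" by blast
      hence Bb: "B = {b}" using Bcard by blast
      obtain k where k: "k \<le> n-1" "items!b = (2*n-1-k, 2*(D - A k) + (if k = 1 then 1 else 0))"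
        using IF(5)[of b] Bbig[OF bB] by blast
      have vB: "val B = 2*(D - A k) + (if k = 1 then 1 else 0)" unfolding Bb val_def using k by simp
      have wB: "wt B = 2*n-1-k" unfolding Bb wt_def using k by simp
      have wSk: "(\<Sum>p\<in>S. p+1) \<le> k" using wI wtI wB wtS k n2 by simp
      have v: "val I = 2 * (\<Sum>p\<in>S. A(p+1)) + 2*(D - A k) + (if k = 1 then 1 else 0)"
        using valI valS vB by simp
      have c1: "odd (val I) \<longrightarrow> val I \<le> 2*D+1"
      proof
        assume od: "odd (val I)"
        have k1: "k = 1"
        proof (rule ccontr)
          assume "k \<noteq> 1"
          hence "val I = 2 * ((\<Sum>p\<in>S. A(p+1)) + (D - A k))" using v by simp
          thus False using od by simp
        qed
        have Ssub: "S \<subseteq> {0}"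
        proof
          fix p assume pS: "p \<in> S"
          have "p + 1 \<le> (\<Sum>p\<in>S. p+1)" using pS finS by (intro member_le_sum) auto
          thus "p \<in> {0}" using wSk k1 by simp
        qed
        have "(\<Sum>p\<in>S. A(p+1)) \<le> A 1"
        proof (cases "S = {}")
          case True thus ?thesis using nonneg[of 1] n2 by simp
        next
          case False hence "S = {0}" using Ssub by blast
          thus ?thesis by simp
        qed
        thus "val I \<le> 2*D+1" using v k1 by simp
      qed
      have c2: "super_additive n A \<longrightarrow> val I \<le> 2*D+1"
      proof
        assume SA: "super_additive n A"
        have "(\<Sum>p\<in>S. A(p+1)) \<le> A(\<Sum>p\<in>S. p+1)"
          using sa_sum[OF SA A0, of S] finS wSk k by simp
        also have "\<dots> \<le> A k" using mono wSk k by blast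
        finally show "val I \<le> 2*D+1" using v by (cases "k = 1") simp_all
      qed
      show ?thesis using c1 c2 by blast
    qed
  qed
  show ?thesis
  proof (cases "super_additive n A")
    case True
    define I0 where "I0 = {0, 2*n-2}"
    have ne: "(0::nat) \<noteq> 2*n-2" using n2 by simp
    have i0: "items!0 = (1, 2*A 1)" using IF(2)[of 0] n2 by simp
    have vI0: "val I0 = 2*D+1" unfolding I0_def val_def using ne i0 IF(3) by simp
    have "wt I0 = 2*n-1" unfolding I0_def wt_def using ne i0 IF(3) n2 by simp
    hence I0F: "I0 \<in> F" unfolding F_def I0_def using n2 by auto
    have "Max (val ` F) = 2*D+1"
      by (rule Max_eqI[OF finF]) (use key True vI0 I0F in \<open>auto intro: image_eqI[where x=I0]\<close>)
    thus ?thesis using True opt unfolding items_def by simp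
  next
    case False
    then obtain i j where ij: "i + j \<le> n-1" "A (i+j) < A i + A j"
      unfolding super_additive_def by force
    have i0: "i \<noteq> 0" proof assume "i = 0" thus False using ij A0 by simp qed
    have j0: "j \<noteq> 0" proof assume "j = 0" thus False using ij A0 by simp qed
    have ineqj: "i \<noteq> j"
    proof
      assume "i = j"
      have "2*i \<le> n-1" using ij(1) \<open>i = j\<close> by linarith
      hence h1: "2*A i \<le> A (2*i)" by (rule assms(4))
      have h2: "A (i+j) = A (2*i)" using \<open>i = j\<close> by (simp add: mult_2)
      have h3: "A i + A j = 2 * A i" using \<open>i = j\<close> by simp
      show False using h1 h2 h3 ij(2) by linarith
    qed
    define k where "k = i + j"
    define I1 where "I1 = {i-1, j-1, n+k-2}"
    have d1: "i-1 \<noteq> j-1" using i0 j0 ineqj by simp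
    have d2: "i-1 \<noteq> n+k-2" "j-1 \<noteq> n+k-2" using ij i0 j0 unfolding k_def by auto
    have it1: "items!(i-1) = (i, 2*A i)" "items!(j-1) = (j, 2*A j)"
      using IF(2)[of "i-1"] IF(2)[of "j-1"] ij i0 j0 by auto
    have k3: "3 \<le> k" "k \<le> n-1" using i0 j0 ineqj ij unfolding k_def by auto
    have it2: "items!(n+k-2) = (2*n-1-k, 2*(D - A k))"
    proof -
      have e: "n+k-2-n+2 = k" using k3 by simp
      have "n-1 < n+k-2" "n+k-2 < 2*n-2" using k3 by auto
      from IF(4)[OF this] show ?thesis unfolding e .
    qed
    have vI1: "val I1 = 2*A i + 2*A j + 2*(D - A k)"
      unfolding I1_def val_def using d1 d2 it1 it2 by simp
    have "wt I1 = i + j + (2*n-1-k)"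
      unfolding I1_def wt_def using d1 d2 it1 it2 by simp
    hence "wt I1 \<le> 2*n-1" using k3 unfolding k_def by simp
    moreover have "I1 \<subseteq> {..<2*n-1}" unfolding I1_def using k3 ij i0 j0 by auto
    ultimately have I1F: "I1 \<in> F" unfolding F_def by simp
    have big: "2*D+2 \<le> val I1" using vI1 ij unfolding k_def by simp
    have mem: "Max (val ` F) \<in> val ` F" using finF I1F by (intro Max_in) auto
    have ge: "val I1 \<le> Max (val ` F)" using finF I1F by (intro Max_ge) auto
    have "\<not> odd (Max (val ` F))"
    proof
      assume od: "odd (Max (val ` F))"
      from mem obtain I where "I \<in> F" "Max (val ` F) = val I" by blast
      with key od have "Max (val ` F) \<le> 2*D+1" by metis
      thus False using big ge by simp
    qed
    thus ?thesis using False opt unfolding items_def by simp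
  qed
qed

end
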